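(* Let $(\Omega,\mathcal{F},\mathbb{P})$ be a probability space with a filtration $\{\mathcal{F}_n\}_{n=0}^\infty$, let $U$ be a stopping time with respect to $\{\mathcal{F}_n\}_{n=0}^\infty$, and let $\{X_n\}_{n=0}^\infty$ be a martingale (resp. supermartingale) adapted to $\{\mathcal{F}_n\}_{n=0}^\infty$. Put $Y=X_U$. Suppose there exist real numbers $M,c_1,c_2,d>0$ such that (i) for all sufficiently large $n\in\mathbb{N}$, $\mathbb{P}(U>n)\le c_1\cdot e^{-c_2\cdot n}$, and (ii) for all $n\in\mathbb{N}$, $|X_{n+1}-X_n|\le M\cdot n^d$ almost surely. Then $\mathbb{E}(|Y|)<\infty$ and $\mathbb{E}(Y)=\mathbb{E}(X_0)$ (resp. $\mathbb{E}(Y)\le\mathbb{E}(X_0)$).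
   Context: A stopping time with respect to $\{\mathcal{F}_n\}$ is a random variable $U:\Omega\to\mathbb{N}\cup\{0,\infty\}$ with $\{U\le n\}\in\mathcal{F}_n$ for all $n$. A process $\{X_n\}$ adapted to $\{\mathcal{F}_n\}$ is a martingale (resp. supermartingale) if $\mathbb{E}(|X_n|)<\infty$ for all $n$ and $\mathbb{E}(X_{n+1}\mid\mathcal{F}_n)=X_n$ (resp. $\le X_n$) almost surely. $X_U$ denotes the random variable $\omega\mapsto X_{U(\omega)}(\omega)$ (well defined almost surely, since condition (i) implies $U<\infty$ a.s.). *)

theory Defs
  imports "HOL-Probability.Probability"
begin

definition nat_filtration :: "'a measure \<Rightarrow> (nat \<Rightarrow> 'a measure) \<Rightarrow> bool" where
  "nat_filtration M F \<longleftrightarrow> (\<forall>n. subalgebra M (F n)) \<and> (\<forall>n m. n \<le> m \<longrightarrow> sets (F n) \<subseteq> sets (F m))"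

definition enat_stopping_time :: "'a measure \<Rightarrow> (nat \<Rightarrow> 'a measure) \<Rightarrow> ('a \<Rightarrow> enat) \<Rightarrow> bool" where
  "enat_stopping_time M F U \<longleftrightarrow> (\<forall>n. {x \<in> space M. U x \<le> enat n} \<in> sets (F n))"

definition adapted :: "(nat \<Rightarrow> 'a measure) \<Rightarrow> (nat \<Rightarrow> 'a \<Rightarrow> real) \<Rightarrow> bool" where
  "adapted F X \<longleftrightarrow> (\<forall>n. X n \<in> borel_measurable (F n))"

definition martingale :: "'a measure \<Rightarrow> (nat \<Rightarrow> 'a measure) \<Rightarrow> (nat \<Rightarrow> 'a \<Rightarrow> real) \<Rightarrow> bool" where
  "martingale M F X \<longleftrightarrow> adapted F X \<and> (\<forall>n. integrable M (X n)) \<and>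
     (\<forall>n. AE x in M. real_cond_exp M (F n) (X (Suc n)) x = X n x)"

definition supermartingale :: "'a measure \<Rightarrow> (nat \<Rightarrow> 'a measure) \<Rightarrow> (nat \<Rightarrow> 'a \<Rightarrow> real) \<Rightarrow> bool" where
  "supermartingale M F X \<longleftrightarrow> adapted F X \<and> (\<forall>n. integrable M (X n)) \<and>
     (\<forall>n. AE x in M. real_cond_exp M (F n) (X (Suc n)) x \<le> X n x)"

text \<open>The stopped value X_U (arbitrary where U = \<infinity>, a null set under the hypotheses).\<close>
definition stopped_value :: "(nat \<Rightarrow> 'a \<Rightarrow> real) \<Rightarrow> ('a \<Rightarrow> enat) \<Rightarrow> 'a \<Rightarrow> real" where
  "stopped_value X U = (\<lambda>x. X (the_enat (U x)) x)"

end

theory Submission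
  imports Defs "HOL-Real_Asymp.Real_Asymp"
begin

lemma summable_aux:
  fixes c d :: real assumes "c > 0" "d > 0"
  shows "summable (\<lambda>k::nat. real k powr d * exp (- c * real k))"
proof (rule summable_comparison_test_ev)
  have "eventually (\<lambda>k::nat. real k powr d * exp (- c * real k) \<le> 1 / real k ^ 2) sequentially"
    using assms by real_asymp
  then show "eventually (\<lambda>k. norm (real k powr d * exp (- c * real k)) \<le> inverse (real k ^ 2)) sequentially"
    by eventually_elim (simp add: field_simps)
  show "summable (\<lambda>k::nat. inverse (real k ^ 2))" by (rule inverse_power_summable) simp
qed

lemma key:
  fixes M :: "'a measure" and F :: "nat \<Rightarrow> 'a measure"
    and U :: "'a \<Rightarrow> enat" and X :: "nat \<Rightarrow> 'a \<Rightarrow> real"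
    and K c1 c2 d :: real
  assumes "prob_space M"
    and filt: "nat_filtration M F"
    and st: "enat_stopping_time M F U"
    and "K > 0" and "c1 > 0" and "c2 > 0" and "d > 0"
    and tail: "\<exists>N. \<forall>n\<ge>N. measure M {x \<in> space M. U x > enat n} \<le> c1 * exp (- c2 * real n)"
    and incr: "\<forall>n\<ge>1. AE x in M. \<bar>X (Suc n) x - X n x\<bar> \<le> K * real n powr d"
    and adp: "adapted F X" and intX: "\<And>n. integrable M (X n)"
  shows "integrable M (stopped_value X U)"
    and "(\<lambda>k. \<integral>x. indicator {x \<in> space M. enat k < U x} x *
                 (real_cond_exp M (F k) (X (Suc k)) x - X k x) \<partial>M)
           sums ((\<integral>x. stopped_value X U x \<partial>M) - (\<integral>x. X 0 x \<partial>M))"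
proof -
  interpret prob_space M by fact
  have sub: "\<And>n. subalgebra M (F n)" using filt by (simp add: nat_filtration_def)
  have sF: "\<And>n. sets (F n) \<subseteq> sets M" and spF: "\<And>n. space (F n) = space M"
    using sub by (auto simp: subalgebra_def)
  have sfs: "\<And>n. sigma_finite_subalgebra M (F n)"
    by (rule finite_measure_subalgebra_is_sigma_finite)
       (simp add: finite_measure_subalgebra_def finite_measure_subalgebra_axioms_def sub finite_measure_axioms)
  define A where "A k = {x \<in> space M. enat k < U x}" for k
  have Ule_F: "{x \<in> space M. U x \<le> enat n} \<in> sets (F n)" for n
    using st by (simp add: enat_stopping_time_def)
  have Ule: "{x \<in> space M. U x \<le> enat n} \<in> sets M" for n using Ule_F sF by blast
  have AF: "A k \<in> sets (F k)" for k
  proof -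
    have "A k = space (F k) - {x \<in> space M. U x \<le> enat k}"
      by (auto simp: A_def spF not_le)
    then show ?thesis using Ule_F by auto
  qed
  have AM: "A k \<in> sets M" for k using AF sF by blast
  have Xm[measurable]: "X n \<in> borel_measurable M" for n
    using adp sub by (auto simp: adapted_def intro: measurable_from_subalg)
  have Ueq: "{x \<in> space M. U x = enat a} \<in> sets M" for a
  proof (cases a)
    case 0
    then have "{x \<in> space M. U x = enat a} = {x \<in> space M. U x \<le> enat 0}"
      by (auto simp: zero_enat_def[symmetric])
    then show ?thesis using Ule by metis
  next
    case (Suc b)
    have "{x \<in> space M. U x = enat a} = {x \<in> space M. U x \<le> enat a} - {x \<in> space M. U x \<le> enat b}"
    proof safe
      fix x assume "x \<in> space M" "U x \<le> enat a" "\<not> U x \<le> enat b"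
      then show "U x = enat a" using Suc by (cases "U x") auto
    qed (auto simp: Suc)
    then show ?thesis using Ule by auto
  qed
  have Uinf: "{x \<in> space M. U x = \<infinity>} \<in> sets M"
  proof -
    have "{x \<in> space M. U x = \<infinity>} = space M - (\<Union>n. {x \<in> space M. U x \<le> enat n})"
      by auto (metis enat.exhaust order_refl)
    then show ?thesis using Ule by auto
  qed
  have Vm: "(\<lambda>x. the_enat (U x)) \<in> M \<rightarrow>\<^sub>M count_space UNIV"
    unfolding measurable_count_space_eq2_countable
  proof safe
    fix a :: nat
    have "(\<lambda>x. the_enat (U x)) -` {a} \<inter> space M =
       {x \<in> space M. U x = enat a} \<union> (if the_enat \<infinity> = a then {x \<in> space M. U x = \<infinity>} else {})"
      by (auto, metis enat.exhaust the_enat.simps) 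
    then show "(\<lambda>x. the_enat (U x)) -` {a} \<inter> space M \<in> sets M" using Ueq Uinf by auto
  qed simp
  have Ym[measurable]: "stopped_value X U \<in> borel_measurable M"
    unfolding stopped_value_def by (rule measurable_compose_countable[OF Xm Vm])
  obtain N where N: "\<forall>n\<ge>N. measure M {x \<in> space M. U x > enat n} \<le> c1 * exp (- c2 * real n)"
    using tail by blast
  have inf0: "measure M {x \<in> space M. U x = \<infinity>} = 0"
  proof -
    have lim: "(\<lambda>n::nat. c1 * exp (- c2 * real n)) \<longlonglongrightarrow> 0" using \<open>c2 > 0\<close> by real_asymp
    have "\<forall>n\<ge>N. measure M {x \<in> space M. U x = \<infinity>} \<le> c1 * exp (- c2 * real n)"
    proof safe
      fix n assume "n \<ge> N"
      have "measure M {x \<in> space M. U x = \<infinity>} \<le> measure M (A n)"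
        by (intro finite_measure_mono AM) (auto simp: A_def)
      then show "measure M {x \<in> space M. U x = \<infinity>} \<le> c1 * exp (- c2 * real n)"
        using N \<open>n \<ge> N\<close> by (auto simp: A_def)
    qed
    then have "measure M {x \<in> space M. U x = \<infinity>} \<le> 0"
      using LIMSEQ_le_const[OF lim] by blast
    then show ?thesis by (simp add: measure_le_0_iff)
  qed
  have AEfin: "AE x in M. U x \<noteq> \<infinity>"
    by (subst AE_iff_measurable[OF Uinf]) (auto simp: emeasure_eq_measure inf0)
  define D where "D k x = X (Suc k) x - X k x" for k x
  define E where "E k x = D k x * indicator (A k) x" for k x
  have Eint: "integrable M (E k)" for k
    unfolding E_def D_def by (intro integrable_real_mult_indicator AM Bochner_Integration.integrable_diff intX)
  have pw: "AE x in M. summable (\<lambda>k. norm (E k x)) \<and> stopped_value X U x = X 0 x + (\<Sum>k. E k x)"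
    using AEfin AE_space
  proof eventually_elim
    case (elim x)
    then obtain m where m: "U x = enat m" by auto
    note xs = \<open>x \<in> space M\<close>
    have z: "E k x = 0" if "k \<notin> {..<m}" for k using that m by (auto simp: E_def A_def)
    have "(\<Sum>k. E k x) = (\<Sum>k<m. E k x)" by (rule suminf_finite) (use z in auto)
    also have "\<dots> = (\<Sum>k<m. D k x)"
      by (rule sum.cong) (auto simp: E_def A_def m xs split: split_indicator)
    also have "\<dots> = X m x - X 0 x" unfolding D_def by (rule sum_lessThan_telescope)
    finally show ?case using m by (auto simp: stopped_value_def intro!: summable_finite[of "{..<m}"] z)
  qed
  have bnd: "(\<integral>x. norm (E k x) \<partial>M) \<le> K * c1 * (real k powr d * exp (- c2 * real k))"
    if "k \<ge> max 1 N" for k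
  proof -
    have "(\<integral>x. norm (E k x) \<partial>M) \<le> (\<integral>x. (K * real k powr d) * indicator (A k) x \<partial>M)"
    proof (rule integral_mono_AE)
      show "integrable M (\<lambda>x. norm (E k x))" using Eint by auto
      show "integrable M (\<lambda>x. (K * real k powr d) * indicator (A k) x)"
        using integrable_real_mult_indicator[OF AM integrable_const] .
      show "AE x in M. norm (E k x) \<le> K * real k powr d * indicator (A k) x"
        using incr that by (auto simp: E_def D_def split: split_indicator elim!: eventually_mono)
    qed
    also have "\<dots> = K * real k powr d * measure M (A k)" using AM by simp
    also have "\<dots> \<le> K * real k powr d * (c1 * exp (- c2 * real k))"
      using N that \<open>K > 0\<close> by (intro mult_left_mono) (auto simp: A_def)
    finally show ?thesis by (simp add: algebra_simps)
  qed
  have summ: "summable (\<lambda>k. \<integral>x. norm (E k x) \<partial>M)"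
  proof (rule summable_comparison_test_ev)
    show "eventually (\<lambda>k. norm (\<integral>x. norm (E k x) \<partial>M) \<le> K * c1 * (real k powr d * exp (- c2 * real k))) sequentially"
      using eventually_ge_at_top[of "max 1 N"] by eventually_elim (use bnd in auto)
    show "summable (\<lambda>k. K * c1 * (real k powr d * exp (- c2 * real k)))"
      by (intro summable_mult summable_aux) (use assms in auto)
  qed
  have pws: "AE x in M. summable (\<lambda>k. norm (E k x))" using pw by auto
  note S1 = integrable_suminf[OF Eint pws summ]
  note S2 = sums_integral[OF Eint pws summ]
  have intS: "integrable M (\<lambda>x. X 0 x + (\<Sum>k. E k x))" using S1 intX by auto
  have ae2: "AE x in M. X 0 x + (\<Sum>k. E k x) = stopped_value X U x" using pw by auto
  show "integrable M (stopped_value X U)"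
    by (rule integrable_cong_AE_imp[OF intS Ym ae2])
  have "(\<integral>x. stopped_value X U x \<partial>M) = (\<integral>x. X 0 x + (\<Sum>k. E k x) \<partial>M)"
    by (rule integral_cong_AE) (use ae2 intS in \<open>auto simp: eq_commute\<close>)
  also have "\<dots> = (\<integral>x. X 0 x \<partial>M) + (\<integral>x. (\<Sum>k. E k x) \<partial>M)"
    using S1 intX by simp
  finally have eqY: "(\<integral>x. stopped_value X U x \<partial>M) - (\<integral>x. X 0 x \<partial>M) = (\<integral>x. (\<Sum>k. E k x) \<partial>M)"
    by simp
  have Eeq: "(\<integral>x. E k x \<partial>M) = (\<integral>x. indicator (A k) x *
                 (real_cond_exp M (F k) (X (Suc k)) x - X k x) \<partial>M)" for k
  proof -
    interpret S: sigma_finite_subalgebra M "F k" by (rule sfs)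
    have ci: "integrable M (real_cond_exp M (F k) (X (Suc k)))" using S.real_cond_exp_int(1)[OF intX] .
    have "(\<integral>x \<in> A k. X (Suc k) x \<partial>M) = (\<integral>x \<in> A k. real_cond_exp M (F k) (X (Suc k)) x \<partial>M)"
      by (rule S.real_cond_exp_intA[OF intX AF])
    then have h: "(\<integral>x. indicator (A k) x * X (Suc k) x \<partial>M) =
        (\<integral>x. indicator (A k) x * real_cond_exp M (F k) (X (Suc k)) x \<partial>M)"
      by (simp add: set_lebesgue_integral_def)
    have i1: "integrable M (\<lambda>x. indicator (A k) x * X n x)" for n
      using integrable_real_mult_indicator[OF AM intX] by (simp add: mult.commute)
    have i2: "integrable M (\<lambda>x. indicator (A k) x * real_cond_exp M (F k) (X (Suc k)) x)"
      using integrable_real_mult_indicator[OF AM ci] by (simp add: mult.commute)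
    have "(\<integral>x. E k x \<partial>M) = (\<integral>x. indicator (A k) x * X (Suc k) x - indicator (A k) x * X k x \<partial>M)"
      by (simp add: E_def D_def algebra_simps)
    also have "\<dots> = (\<integral>x. indicator (A k) x * X (Suc k) x \<partial>M) - (\<integral>x. indicator (A k) x * X k x \<partial>M)"
      using i1 by simp
    also have "\<dots> = (\<integral>x. indicator (A k) x * real_cond_exp M (F k) (X (Suc k)) x \<partial>M) - (\<integral>x. indicator (A k) x * X k x \<partial>M)"
      using h by simp
    also have "\<dots> = (\<integral>x. indicator (A k) x * real_cond_exp M (F k) (X (Suc k)) x - indicator (A k) x * X k x \<partial>M)"
      using i1 i2 by simp
    finally show ?thesis by (simp add: algebra_simps)
  qed
  show "(\<lambda>k. \<integral>x. indicator {x \<in> space M. enat k < U x} x *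
                 (real_cond_exp M (F k) (X (Suc k)) x - X k x) \<partial>M)
           sums ((\<integral>x. stopped_value X U x \<partial>M) - (\<integral>x. X 0 x \<partial>M))"
    using S2 unfolding eqY Eeq A_def .
qed

theorem theorem5p2:
  fixes M :: "'a measure" and F :: "nat \<Rightarrow> 'a measure"
    and U :: "'a \<Rightarrow> enat" and X :: "nat \<Rightarrow> 'a \<Rightarrow> real"
    and K c1 c2 d :: real
  assumes "prob_space M"
    and "nat_filtration M F"
    and "enat_stopping_time M F U"
    and "K > 0" and "c1 > 0" and "c2 > 0" and "d > 0"
    and "\<exists>N. \<forall>n\<ge>N. measure M {x \<in> space M. U x > enat n} \<le> c1 * exp (- c2 * real n)"
    and "\<forall>n\<ge>1. AE x in M. \<bar>X (Suc n) x - X n x\<bar> \<le> K * real n powr d"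
  shows "(martingale M F X \<longrightarrow>
            integrable M (stopped_value X U) \<and>
            (\<integral>x. stopped_value X U x \<partial>M) = (\<integral>x. X 0 x \<partial>M))
       \<and> (supermartingale M F X \<longrightarrow>
            integrable M (stopped_value X U) \<and>
            (\<integral>x. stopped_value X U x \<partial>M) \<le> (\<integral>x. X 0 x \<partial>M))"
proof safe
  assume mg: "martingale M F X"
  have adp: "adapted F X" and intX: "\<And>n. integrable M (X n)"
    and ce: "\<And>n. AE x in M. real_cond_exp M (F n) (X (Suc n)) x = X n x"
    using mg by (auto simp: martingale_def)
  note k = key[OF assms adp intX]
  show "integrable M (stopped_value X U)" by (rule k(1))
  have "(\<integral>x. indicator {x \<in> space M. enat n < U x} x *
                 (real_cond_exp M (F n) (X (Suc n)) x - X n x) \<partial>M) = 0" for n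
    by (rule integral_eq_zero_AE) (use ce[of n] in \<open>auto elim!: eventually_mono\<close>)
  then have "(\<lambda>_. 0::real) sums ((\<integral>x. stopped_value X U x \<partial>M) - (\<integral>x. X 0 x \<partial>M))"
    using k(2) by simp
  then show "(\<integral>x. stopped_value X U x \<partial>M) = (\<integral>x. X 0 x \<partial>M)"
    using sums_zero sums_unique2 by fastforce
next
  assume mg: "supermartingale M F X"
  have adp: "adapted F X" and intX: "\<And>n. integrable M (X n)"
    and ce: "\<And>n. AE x in M. real_cond_exp M (F n) (X (Suc n)) x \<le> X n x"
    using mg by (auto simp: supermartingale_def)
  note k = key[OF assms adp intX]
  show "integrable M (stopped_value X U)" by (rule k(1))
  have "(\<integral>x. indicator {x \<in> space M. enat n < U x} x *
                 (real_cond_exp M (F n) (X (Suc n)) x - X n x) \<partial>M) \<le> 0" for n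
  proof -
    have "0 \<le> (\<integral>x. - (indicator {x \<in> space M. enat n < U x} x *
                 (real_cond_exp M (F n) (X (Suc n)) x - X n x)) \<partial>M)"
      by (rule integral_nonneg_AE) (use ce[of n] in \<open>auto elim!: eventually_mono split: split_indicator\<close>)
    then show ?thesis by simp
  qed
  then have "(\<integral>x. stopped_value X U x \<partial>M) - (\<integral>x. X 0 x \<partial>M) \<le> 0"
    using sums_le[OF _ k(2) sums_zero] by blast
  then show "(\<integral>x. stopped_value X U x \<partial>M) \<le> (\<integral>x. X 0 x \<partial>M)" by simp
qed

end
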